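(* Let $x(t)=x^{(N)}(t)$ be the Markov process with generator $L=L_0+L_s$ defined in the context, and let $R_N(t):=\mathsf E\,V(x(t))$. Assume $\sup_N |R_N(0)|<\infty$, and let $t(N)\to\infty$ as $N\to\infty$. Put $\varkappa=\sum_{j=1}^l k_j^2-k$. Then, as $N\to\infty$ (with $f\sim g$ meaning $f/g\to1$): (i) if $t(N)/N^2\to0$, then $R_N(t(N))\sim\alpha b_2\,t(N)$; (ii) if $t(N)=cN^2$ for a constant $c>0$, then $R_N(t(N))\sim\alpha b_2(\delta\varkappa)^{-1}\big(1-e^{-\delta\varkappa c}\big)N^2$; (iii) if $t(N)/N^2\to\infty$, then $R_N(t(N))\sim\alpha b_2(\delta\varkappa)^{-1}N^2$.
   Context: Fix an integer $k\ge2$ and integers $k_1,\dots,k_l\ge2$ with $k_1+\dots+k_l=k$ (fixed independently of $N$). For $N\ge k$, let $\mathcal I$ be the set of ordered $k$-tuples $(i_1,\dots,i_k)$ of pairwise distinct elements of $\{1,\dots,N\}$. For $(i_1,\dots,i_k)\in\mathcal I$ split it into consecutive blocks $\Gamma_1,\dots,\Gamma_l$ of lengths $k_1,\dots,k_l$ and let $g_j$ be the first element of $\Gamma_j$. The synchronization map $J^{(i_1,\dots,i_k)}:\mathbb{R}^N\to\mathbb{R}^N$, $x\mapsto y$, is $y_m=x_m$ if $m\notin\{i_1,\dots,i_k\}$ and $y_m=x_{g_j}$ if $m\in\Gamma_j$. Let $\alpha>0,\delta>0$ (independent of $N$), and let $\rho$ be a probability measure on $\mathbb{R}$ with compact support and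 $b_2:=\int z^2\rho(dz)>0$. The process $x(t)=(x_1(t),\dots,x_N(t))\in\mathbb{R}^N$ is the continuous-time Markov jump process with generator $L=L_0+L_s$, $(L_0f)(x)=\alpha\sum_{i=1}^N\int\big(f(x+ze_i)-f(x)\big)\rho(dz)$, $(L_sf)(x)=\frac{\delta}{N(N-1)\cdots(N-k+1)}\sum_{(i_1,\dots,i_k)\in\mathcal I}\big(f(J^{(i_1,\dots,i_k)}x)-f(x)\big)$: each particle independently jumps $x_i\to x_i+z$, $z\sim\rho$, at rate $\alpha$, and independently at rate $\delta$ a uniformly random tuple of $\mathcal I$ is chosen and the configuration is replaced by $J^{(i_1,\dots,i_k)}x$. The initial configuration $x(0)$ may be random. $V(x)=\frac{1}{N(N-1)}\sum_{1\le m<n\le N}(x_m-x_n)^2$ (the empirical variance). *)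

theory Defs
  imports "HOL-Probability.Probability" "HOL-Library.Landau_Symbols"
begin

text \<open>Configurations of N particles are functions nat => real; only indices 0..N-1 matter.\<close>

text \<open>Given block lengths ks = [k_1,...,k_l] and a position p in a tuple of length sum ks,
  block_start ks p is the position of the first element of the block containing p.\<close>
fun block_start :: "nat list \<Rightarrow> nat \<Rightarrow> nat" where
  "block_start [] p = 0"
| "block_start (a # ks) p = (if p < a then 0 else a + block_start ks (p - a))"

definition tuples :: "nat \<Rightarrow> nat \<Rightarrow> nat list set" where
  "tuples N k = {is. length is = k \<and> distinct is \<and> set is \<subseteq> {..<N}}"

definition sync_map :: "nat list \<Rightarrow> nat list \<Rightarrow> (nat \<Rightarrow> real) \<Rightarrow> (nat \<Rightarrow> real)" where
  "sync_map ks is x = (\<lambda>m. if m \<in> set is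
      then x (is ! block_start ks (THE p. p < length is \<and> is ! p = m))
      else x m)"

definition gen_L :: "real \<Rightarrow> real \<Rightarrow> real measure \<Rightarrow> nat list \<Rightarrow> nat
    \<Rightarrow> ((nat \<Rightarrow> real) \<Rightarrow> real) \<Rightarrow> (nat \<Rightarrow> real) \<Rightarrow> real" where
  "gen_L \<alpha> \<delta> \<rho> ks N f x =
     \<alpha> * (\<Sum>i<N. \<integral>z. (f (x(i := x i + z)) - f x) \<partial>\<rho>)
   + \<delta> / (\<Prod>j<sum_list ks. real (N - j)) *
       (\<Sum>is\<in>tuples N (sum_list ks). f (sync_map ks is x) - f x)"

text \<open>Uniformization: total jump rate lam = alpha N + delta; one-step transition operator
  K f = f + L f / lam (the embedded jump chain at the rings of a Poisson clock of rate lam).\<close>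
definition unif_rate :: "real \<Rightarrow> real \<Rightarrow> nat \<Rightarrow> real" where
  "unif_rate \<alpha> \<delta> N = \<alpha> * real N + \<delta>"

definition jump_op :: "real \<Rightarrow> real \<Rightarrow> real measure \<Rightarrow> nat list \<Rightarrow> nat
    \<Rightarrow> ((nat \<Rightarrow> real) \<Rightarrow> real) \<Rightarrow> (nat \<Rightarrow> real) \<Rightarrow> real" where
  "jump_op \<alpha> \<delta> \<rho> ks N f x = f x + gen_L \<alpha> \<delta> \<rho> ks N f x / unif_rate \<alpha> \<delta> N"

text \<open>E f(x(t)) for the Markov jump process with generator L and initial law mu0:
  condition on the number n of rings of the Poisson(lam t) clock up to time t.\<close>
definition proc_expect :: "real \<Rightarrow> real \<Rightarrow> real measure \<Rightarrow> nat list \<Rightarrow> nat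
    \<Rightarrow> (nat \<Rightarrow> real) measure \<Rightarrow> ((nat \<Rightarrow> real) \<Rightarrow> real) \<Rightarrow> real \<Rightarrow> real" where
  "proc_expect \<alpha> \<delta> \<rho> ks N \<mu>0 f t =
     (\<Sum>n. exp (- (unif_rate \<alpha> \<delta> N * t)) * (unif_rate \<alpha> \<delta> N * t) ^ n / fact n
            * (\<integral>x. ((jump_op \<alpha> \<delta> \<rho> ks N ^^ n) f) x \<partial>\<mu>0))"

definition emp_var :: "nat \<Rightarrow> (nat \<Rightarrow> real) \<Rightarrow> real" where
  "emp_var N x = 1 / (real N * (real N - 1)) *
     (\<Sum>m<N. \<Sum>n\<in>{m<..<N}. (x m - x n)^2)"

end

theory Submission
  imports Defs "HOL-Real_Asymp.Real_Asymp"
begin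
definition pos :: "nat list \<Rightarrow> nat \<Rightarrow> nat" where
  "pos is m = (THE p. p < length is \<and> is ! p = m)"

definition phi :: "nat list \<Rightarrow> nat list \<Rightarrow> nat \<Rightarrow> nat" where
  "phi ks is m = (if m \<in> set is then is ! block_start ks (pos is m) else m)"

lemma sync_phi: "sync_map ks is x = (\<lambda>m. x (phi ks is m))"
  unfolding sync_map_def phi_def pos_def by (rule ext) simp

lemma pos_nth: "distinct is \<Longrightarrow> p < length is \<Longrightarrow> pos is (is ! p) = p"
  unfolding pos_def by (rule the_equality) (auto simp: nth_eq_iff_index_eq)

lemma pos_in: assumes "distinct is" "m \<in> set is"
  shows "pos is m < length is \<and> is ! pos is m = m"
proof -
  have "\<exists>!p. p < length is \<and> is ! p = m" using distinct_Ex1[OF assms] .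
  then show ?thesis unfolding pos_def by (rule theI')
qed

lemma sum_split_add: "(\<Sum>p<a + K. h p) = (\<Sum>p<a. h p) + (\<Sum>p<K. h (a + p :: nat))"
proof -
  have "(\<Sum>p<a + K. h p) = (\<Sum>p<a. h p) + (\<Sum>p\<in>{a..<a+K}. h p)"
    by (metis add.commute atLeast0LessThan le_add2 sum.atLeastLessThan_concat zero_le)
  also have "(\<Sum>p\<in>{a..<a+K}. h p) = (\<Sum>p<K. h (a + p))"
    using sum.shift_bounds_nat_ivl[of h 0 a K] by (simp add: atLeast0LessThan add.commute)
  finally show ?thesis .
qed

lemma block_start_le: "block_start ks p \<le> p"
proof (induction ks arbitrary: p)
  case (Cons a ks)
  show ?case using Cons[of "p - a"] by auto
qed simp

lemma block_count:
  "(\<Sum>p<sum_list ks. \<Sum>q<sum_list ks. (if block_start ks p = block_start ks q then 1 else 0 :: nat))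
     = (\<Sum>j\<leftarrow>ks. j^2)"
proof (induction ks)
  case Nil
  then show ?case by simp
next
  case (Cons a ks)
  let ?K = "sum_list ks"
  let ?b = "block_start ks"
  let ?B = "block_start (a#ks)"
  have lo: "p < a \<Longrightarrow> ?B p = 0" for p by simp
  have hi: "?B (a + p) = a + ?b p" for p by simp
  have A: "(\<Sum>q<a + ?K. (if ?B p = ?B q then 1 else 0 :: nat)) = a" if "p < a" for p
  proof -
    have "(\<Sum>q<?K. (if ?B p = ?B (a + q) then 1 else 0 :: nat)) = 0"
      using that by (intro sum.neutral) auto
    moreover have "(\<Sum>q<a. (if ?B p = ?B q then 1 else 0 :: nat)) = a"
      using that by simp
    ultimately show ?thesis by (simp add: sum_split_add)
  qed
  have B: "(\<Sum>q<a + ?K. (if ?B (a+p) = ?B q then 1 else 0 :: nat))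
       = (\<Sum>q<?K. (if ?b p = ?b q then 1 else 0 :: nat))" for p
  proof -
    have "(\<Sum>q<a. (if ?B (a+p) = ?B q then 1 else 0 :: nat)) = 0"
      by (intro sum.neutral) auto
    then show ?thesis by (simp add: sum_split_add)
  qed
  have "(\<Sum>p<a + ?K. \<Sum>q<a + ?K. (if ?B p = ?B q then 1 else 0 :: nat))
      = (\<Sum>p<a. a) + (\<Sum>p<?K. \<Sum>q<?K. (if ?b p = ?b q then 1 else 0 :: nat))"
    unfolding sum_split_add[of _ a ?K]
    by (intro arg_cong2[where f="(+)"] sum.cong) (simp_all only: A[unfolded sum_split_add] B[unfolded sum_split_add] lessThan_iff)
  also have "\<dots> = a^2 + (\<Sum>j\<leftarrow>ks. j^2)" using Cons.IH by (simp add: power2_eq_square)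
  finally show ?case by simp
qed


lemma phi_mem: assumes "distinct is" "length is = sum_list ks" "m \<in> set is"
  shows "phi ks is m \<in> set is"
proof -
  have "block_start ks (pos is m) < length is"
    using pos_in[OF assms(1,3)] block_start_le[of ks "pos is m"] by linarith
  then show ?thesis using assms(3) by (simp add: phi_def)
qed

lemma phi_lt: assumes "is \<in> tuples N (sum_list ks)" "m < N"
  shows "phi ks is m < N"
proof (cases "m \<in> set is")
  case True
  then have "phi ks is m \<in> set is" using phi_mem assms(1) by (auto simp: tuples_def)
  then show ?thesis using assms(1) by (auto simp: tuples_def)
qed (use assms in \<open>simp add: phi_def\<close>)

lemma phi_count:
  assumes T: "is \<in> tuples N (sum_list ks)"
  shows "(\<Sum>m<N. \<Sum>n<N. (if phi ks is m = phi ks is n then 1 else 0 :: nat))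
     = N - sum_list ks + (\<Sum>j\<leftarrow>ks. j^2)"
proof -
  let ?k = "sum_list ks"
  let ?S = "set is"
  let ?U = "{..<N}"
  let ?F = "\<lambda>m. (\<Sum>n<N. (if phi ks is m = phi ks is n then 1 else 0 :: nat))"
  let ?G = "\<lambda>m n. (if block_start ks (pos is m) = block_start ks (pos is n) then 1 else 0 :: nat)"
  have d: "distinct is" and len: "length is = ?k" and SU: "?S \<subseteq> ?U"
    using T by (auto simp: tuples_def)
  have fin: "finite ?U" by simp
  have split: "\<And>g. (\<Sum>m\<in>?U. g m) = (\<Sum>m\<in>?U - ?S. g m) + (\<Sum>m\<in>?S. g m)"
    using sum.subset_diff[OF SU fin] by simp
  have out: "?F m = 1" if m: "m \<in> ?U - ?S" for m
  proof -
    have "?F m = (\<Sum>n<N. (if n = m then 1 else 0 :: nat))"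
    proof (rule sum.cong[OF refl])
      fix n assume "n \<in> ?U"
      show "(if phi ks is m = phi ks is n then 1 else 0 :: nat) = (if n = m then 1 else 0)"
      proof (cases "n \<in> ?S")
        case True
        then have "phi ks is n \<in> ?S" using phi_mem d len by blast
        then show ?thesis using m True by (auto simp: phi_def)
      qed (use m in \<open>auto simp: phi_def\<close>)
    qed
    also have "\<dots> = 1" using m by simp
    finally show ?thesis .
  qed
  have inn: "?F m = (\<Sum>n\<in>?S. ?G m n)" if m: "m \<in> ?S" for m
  proof -
    have pm: "phi ks is m \<in> ?S" using phi_mem d len m by blast
    have "?F m = (\<Sum>n\<in>?U - ?S. (if phi ks is m = phi ks is n then 1 else 0 :: nat))
        + (\<Sum>n\<in>?S. (if phi ks is m = phi ks is n then 1 else 0 :: nat))"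
      by (rule split)
    also have "(\<Sum>n\<in>?U - ?S. (if phi ks is m = phi ks is n then 1 else 0 :: nat)) = 0"
      using pm by (intro sum.neutral) (auto simp: phi_def)
    also have "(\<Sum>n\<in>?S. (if phi ks is m = phi ks is n then 1 else 0 :: nat)) = (\<Sum>n\<in>?S. ?G m n)"
    proof (rule sum.cong[OF refl])
      fix n assume n: "n \<in> ?S"
      have a: "block_start ks (pos is m) < length is"
        using pos_in[OF d m] block_start_le[of ks "pos is m"] by linarith
      have b: "block_start ks (pos is n) < length is"
        using pos_in[OF d n] block_start_le[of ks "pos is n"] by linarith
      show "(if phi ks is m = phi ks is n then 1 else 0 :: nat) = ?G m n"
        using m n nth_eq_iff_index_eq[OF d a b] by (simp add: phi_def)
    qed
    finally show ?thesis by simp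
  qed
  have "(\<Sum>m<N. ?F m) = (\<Sum>m\<in>?U - ?S. ?F m) + (\<Sum>m\<in>?S. ?F m)" by (rule split)
  also have "(\<Sum>m\<in>?U - ?S. ?F m) = card (?U - ?S)" using out by simp
  also have "card (?U - ?S) = N - ?k"
    using SU card_Diff_subset[OF finite_set SU] distinct_card[OF d] len by simp
  also have "(\<Sum>m\<in>?S. ?F m) = (\<Sum>m\<in>?S. \<Sum>n\<in>?S. ?G m n)" using inn by simp
  also have "\<dots> = (\<Sum>p<?k. \<Sum>n\<in>?S. ?G (is ! p) n)"
    using sum.reindex_bij_betw[OF bij_betw_nth[OF d refl refl], of "\<lambda>m. \<Sum>n\<in>?S. ?G m n"] len by simp
  also have "\<dots> = (\<Sum>p<?k. \<Sum>q<?k. ?G (is ! p) (is ! q))"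
  proof (rule sum.cong[OF refl])
    fix p
    show "(\<Sum>n\<in>?S. ?G (is ! p) n) = (\<Sum>q<?k. ?G (is ! p) (is ! q))"
      using sum.reindex_bij_betw[OF bij_betw_nth[OF d refl refl], of "\<lambda>n. ?G (is ! p) n"] len by simp
  qed
  also have "\<dots> = (\<Sum>p<?k. \<Sum>q<?k. (if block_start ks p = block_start ks q then 1 else 0 :: nat))"
    using pos_nth[OF d] len by simp
  also have "\<dots> = (\<Sum>j\<leftarrow>ks. j^2)" by (rule block_count)
  finally show ?thesis .
qed


lemma fiber1:
  assumes "finite A" "finite B" "\<phi> ` A \<subseteq> B"
  shows "(\<Sum>m\<in>A. h (\<phi> m)) = (\<Sum>a\<in>B. h a * real (card {m\<in>A. \<phi> m = a}))"
proof -
  have "(\<Sum>m\<in>A. h (\<phi> m)) = (\<Sum>a\<in>B. \<Sum>m\<in>{m\<in>A. \<phi> m = a}. h (\<phi> m))"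
    using sum.group[OF assms, of "\<lambda>m. h (\<phi> m)"] by simp
  also have "\<dots> = (\<Sum>a\<in>B. h a * real (card {m\<in>A. \<phi> m = a}))"
  proof (rule sum.cong[OF refl])
    fix a
    have "(\<Sum>m\<in>{m\<in>A. \<phi> m = a}. h (\<phi> m)) = (\<Sum>m\<in>{m\<in>A. \<phi> m = a}. h a)"
      by (rule sum.cong) auto
    then show "(\<Sum>m\<in>{m\<in>A. \<phi> m = a}. h (\<phi> m)) = h a * real (card {m\<in>A. \<phi> m = a})"
      by simp
  qed
  finally show ?thesis .
qed

definition wc :: "nat list \<Rightarrow> nat list \<Rightarrow> nat \<Rightarrow> nat \<Rightarrow> real" where
  "wc ks is N a = real (card {m\<in>{..<N}. phi ks is m = a})"

lemma fiber2:
  assumes "is \<in> tuples N (sum_list ks)"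
  shows "(\<Sum>m<N. \<Sum>n<N. h (phi ks is m) (phi ks is n))
      = (\<Sum>a<N. \<Sum>b<N. h a b * (wc ks is N a * wc ks is N b))"
proof -
  have im: "phi ks is ` {..<N} \<subseteq> {..<N}" using phi_lt[OF assms] by auto
  have "(\<Sum>m<N. \<Sum>n<N. h (phi ks is m) (phi ks is n))
      = (\<Sum>m<N. \<Sum>b<N. h (phi ks is m) b * wc ks is N b)"
    unfolding wc_def by (intro sum.cong refl fiber1 im) auto
  also have "\<dots> = (\<Sum>a<N. (\<Sum>b<N. h a b * wc ks is N b) * wc ks is N a)"
    unfolding wc_def by (rule fiber1[OF _ _ im]) auto
  also have "\<dots> = (\<Sum>a<N. \<Sum>b<N. h a b * (wc ks is N a * wc ks is N b))"
    by (simp add: sum_distrib_left mult_ac)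
  finally show ?thesis .
qed

definition sw :: "nat \<Rightarrow> nat \<Rightarrow> nat \<Rightarrow> nat" where
  "sw u v m = (if m = u then v else if m = v then u else m)"

lemma sw_sw[simp]: "sw u v (sw u v m) = m" by (simp add: sw_def)
lemma sw_inj: "inj (sw u v)" by (metis injI sw_sw)
lemma sw_eq_iff[simp]: "sw u v m = sw u v n \<longleftrightarrow> m = n" by (metis sw_sw)
lemma sw_lt: "u < N \<Longrightarrow> v < N \<Longrightarrow> m < N \<Longrightarrow> sw u v m < N" by (simp add: sw_def)
lemma sw_comp[simp]: "sw u v \<circ> sw u v = id" by (rule ext) simp
lemma map_sw_sw[simp]: "map (sw u v) (map (sw u v) xs) = xs" by (induction xs) auto

lemma phi_sw:
  assumes d: "distinct is"
  shows "phi ks (map (sw u v) is) (sw u v m) = sw u v (phi ks is m)"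
proof (cases "m \<in> set is")
  case True
  let ?p = "pos is m"
  have p: "?p < length is" "is ! ?p = m" using pos_in[OF d True] by auto
  have d': "distinct (map (sw u v) is)" using d sw_inj by (simp add: distinct_map inj_on_def)
  have "(map (sw u v) is) ! ?p = sw u v m" using p by simp
  then have pp: "pos (map (sw u v) is) (sw u v m) = ?p" using pos_nth[OF d', of ?p] p by simp
  have b: "block_start ks ?p < length is" using p(1) block_start_le[of ks ?p] by linarith
  show ?thesis using True pp b by (simp add: phi_def)
next
  case False
  then have "sw u v m \<notin> set (map (sw u v) is)" by auto
  then show ?thesis using False by (simp add: phi_def)
qed

lemma tuples_sw: "u < N \<Longrightarrow> v < N \<Longrightarrow> is \<in> tuples N k \<Longrightarrow> map (sw u v) is \<in> tuples N k"
  unfolding tuples_def using sw_inj sw_lt by (auto simp: distinct_map inj_on_def)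

lemma wc_sw:
  assumes uv: "u < N" "v < N" and T: "is \<in> tuples N k"
  shows "wc ks (map (sw u v) is) N (sw u v a) = wc ks is N a"
proof -
  have d: "distinct is" using T by (simp add: tuples_def)
  have "{m\<in>{..<N}. phi ks (map (sw u v) is) m = sw u v a} = sw u v ` {m\<in>{..<N}. phi ks is m = a}"
  proof (rule set_eqI)
    fix m
    have e1: "m \<in> sw u v ` X \<longleftrightarrow> sw u v m \<in> X" for X by (metis image_iff sw_sw)
    have e2: "sw u v m < N \<longleftrightarrow> m < N" using sw_lt[OF uv] by (metis sw_sw)
    have e3: "phi ks (map (sw u v) is) m = sw u v (phi ks is (sw u v m))"
      using phi_sw[OF d, of ks u v "sw u v m"] by simp
    show "m \<in> {m\<in>{..<N}. phi ks (map (sw u v) is) m = sw u v a} \<longleftrightarrow> m \<in> sw u v ` {m\<in>{..<N}. phi ks is m = a}"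
      unfolding e1 using e2 e3 by auto
  qed
  then show ?thesis unfolding wc_def by (simp add: card_image inj_on_def)
qed

definition Cw :: "nat list \<Rightarrow> nat \<Rightarrow> nat \<Rightarrow> nat \<Rightarrow> real" where
  "Cw ks N a b = (\<Sum>is\<in>tuples N (sum_list ks). wc ks is N a * wc ks is N b)"

lemma Cw_sw:
  assumes uv: "u < N" "v < N"
  shows "Cw ks N (sw u v a) (sw u v b) = Cw ks N a b"
  unfolding Cw_def
proof (rule sum.reindex_bij_witness[where i="map (sw u v)" and j="map (sw u v)"])
  fix js assume js: "js \<in> tuples N (sum_list ks)"
  show "wc ks (map (sw u v) js) N a * wc ks (map (sw u v) js) N b = wc ks js N (sw u v a) * wc ks js N (sw u v b)"
    using wc_sw[OF uv tuples_sw[OF uv js], of ks a] wc_sw[OF uv tuples_sw[OF uv js], of ks b] by simp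
qed (auto simp: tuples_sw[OF uv])

lemma Cw_const:
  assumes "a < N" "b < N" "a' < N" "b' < N" "a \<noteq> b" "a' \<noteq> b'"
  shows "Cw ks N a b = Cw ks N a' b'"
proof -
  let ?b1 = "sw a a' b"
  have 1: "Cw ks N a b = Cw ks N a' ?b1"
    using Cw_sw[of a N a' ks a b] assms by (simp add: sw_def)
  have ne: "?b1 \<noteq> a'" using assms by (auto simp: sw_def)
  have "?b1 < N" using sw_lt assms by simp
  then have 2: "Cw ks N a' ?b1 = Cw ks N a' b'"
    using Cw_sw[of ?b1 N b' ks a' ?b1] assms ne by (simp add: sw_def)
  show ?thesis using 1 2 by simp
qed


definition Qs :: "nat \<Rightarrow> (nat \<Rightarrow> real) \<Rightarrow> real" where "Qs N x = (\<Sum>m<N. (x m)^2)"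
definition Ps :: "nat \<Rightarrow> (nat \<Rightarrow> real) \<Rightarrow> real" where "Ps N x = (\<Sum>m<N. x m)"

lemma half_sum:
  "(\<Sum>m<N. \<Sum>n\<in>{m<..<N}. (x m - x n)^2) = real N * Qs N x - (Ps N x)^2"
proof (induction N)
  case 0
  then show ?case by (simp add: Qs_def Ps_def)
next
  case (Suc N)
  have "(\<Sum>m<Suc N. \<Sum>n\<in>{m<..<Suc N}. (x m - x n)^2)
      = (\<Sum>m<N. \<Sum>n\<in>{m<..<Suc N}. (x m - x n)^2)"
  proof -
    have "{N<..<Suc N} = {}" by auto
    then show ?thesis by simp
  qed
  also have "\<dots> = (\<Sum>m<N. (\<Sum>n\<in>{m<..<N}. (x m - x n)^2) + (x m - x N)^2)"
  proof (rule sum.cong[OF refl])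
    fix m assume "m \<in> {..<N}"
    then have "{m<..<Suc N} = insert N {m<..<N}" by auto
    then show "(\<Sum>n\<in>{m<..<Suc N}. (x m - x n)^2) = (\<Sum>n\<in>{m<..<N}. (x m - x n)^2) + (x m - x N)^2"
      by simp
  qed
  also have "\<dots> = (\<Sum>m<N. \<Sum>n\<in>{m<..<N}. (x m - x n)^2) + (\<Sum>m<N. (x m - x N)^2)"
    by (simp add: sum.distrib)
  also have "(\<Sum>m<N. (x m - x N)^2) = Qs N x - 2 * x N * Ps N x + real N * (x N)^2"
    by (simp add: power2_diff sum.distrib sum_subtractf sum_distrib_left sum_distrib_right Qs_def Ps_def mult_ac)
  finally have "(\<Sum>m<Suc N. \<Sum>n\<in>{m<..<Suc N}. (x m - x n)^2)
     = real N * Qs N x - (Ps N x)^2 + (Qs N x - 2 * x N * Ps N x + real N * (x N)^2)"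
    using Suc.IH by simp
  also have "\<dots> = real (Suc N) * Qs (Suc N) x - (Ps (Suc N) x)^2"
    by (simp add: Qs_def Ps_def algebra_simps power2_eq_square)
  finally show ?case .
qed

lemma emp_var_QP: "emp_var N x = (real N * Qs N x - (Ps N x)^2) / (real N * (real N - 1))"
  unfolding emp_var_def half_sum by simp

definition Ssum :: "nat \<Rightarrow> (nat \<Rightarrow> real) \<Rightarrow> real" where
  "Ssum N x = (\<Sum>m<N. \<Sum>n<N. (x m - x n)^2)"

lemma Ssum_QP: "Ssum N x = 2 * (real N * Qs N x - (Ps N x)^2)"
  unfolding Ssum_def Qs_def Ps_def
  by (simp add: power2_diff sum.distrib sum_subtractf sum_distrib_left sum_distrib_right
      algebra_simps power2_eq_square)

lemma emp_var_S: "emp_var N x = Ssum N x / (2 * (real N * (real N - 1)))"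
  unfolding emp_var_QP Ssum_QP by (rule mult_divide_mult_cancel_left[symmetric]) simp

lemma sum_upd: "i < (N::nat) \<Longrightarrow> (\<Sum>m<N. f ((x(i:=v)) m)) = (\<Sum>m<N. f (x m)) - f (x i) + (f v :: real)"
proof -
  assume i: "i < N"
  have "(\<Sum>m<N. f ((x(i:=v)) m)) = (\<Sum>m<N. f (x m) + (if m = i then f v - f (x i) else 0))"
    by (rule sum.cong) auto
  also have "\<dots> = (\<Sum>m<N. f (x m)) + (f v - f (x i))"
    using i sum.delta[of "{..<N}" i "\<lambda>_. f v - f (x i)"] by (simp add: sum.distrib)
  finally show ?thesis by simp
qed

lemma V_upd:
  assumes i: "i < N"
  shows "emp_var N (x(i := x i + z)) - emp_var N x
     = ((2 * real N * x i - 2 * Ps N x) * z + (real N - 1) * z^2) / (real N * (real N - 1))"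
proof -
  have Q: "Qs N (x(i := x i + z)) = Qs N x - (x i)^2 + (x i + z)^2"
    unfolding Qs_def using sum_upd[OF i, of "\<lambda>t. t^2"] by simp
  have P: "Ps N (x(i := x i + z)) = Ps N x - x i + (x i + z)"
    unfolding Ps_def using sum_upd[OF i, of "\<lambda>t. t"] by simp
  show ?thesis unfolding emp_var_QP Q P
    by (simp add: diff_divide_distrib[symmetric] algebra_simps power2_eq_square)
qed

lemma rho_int:
  fixes \<rho> :: "real measure"
  assumes "prob_space \<rho>" "sets \<rho> = sets borel" "\<exists>C. AE z in \<rho>. \<bar>z\<bar> \<le> C"
  shows "integrable \<rho> (\<lambda>z. z)" "integrable \<rho> (\<lambda>z. z^2)"
proof -
  interpret prob_space \<rho> by fact
  obtain C where C: "AE z in \<rho>. \<bar>z\<bar> \<le> C" using assms(3) by auto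
  have m: "(\<lambda>z. z) \<in> borel_measurable \<rho>" by (rule measurable_ident_sets[OF assms(2)])
  have m2: "(\<lambda>z. z^2) \<in> borel_measurable \<rho>" using borel_measurable_power[OF m, of 2] by simp
  show "integrable \<rho> (\<lambda>z. z)"
    by (rule Bochner_Integration.integrable_bound[OF integrable_const[of C] m]) (use C in auto)
  show "integrable \<rho> (\<lambda>z. z^2)"
  proof (rule Bochner_Integration.integrable_bound[OF integrable_const[of "C^2"] m2])
    show "AE z in \<rho>. norm (z^2) \<le> norm (C^2)"
      using C
    proof eventually_elim
      fix z :: real assume "\<bar>z\<bar> \<le> C"
      then have "\<bar>z\<bar> \<le> \<bar>C\<bar>" by simp
      then have "z^2 \<le> C^2" by (simp add: abs_le_square_iff)
      then show "norm (z^2) \<le> norm (C^2)" by simp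
    qed
  qed
qed

lemma L0_V:
  fixes \<rho> :: "real measure"
  assumes "prob_space \<rho>" "sets \<rho> = sets borel" "\<exists>C. AE z in \<rho>. \<bar>z\<bar> \<le> C" and N: "N \<ge> 2"
  shows "(\<Sum>i<N. \<integral>z. (emp_var N (x(i := x i + z)) - emp_var N x) \<partial>\<rho>) = (\<integral>z. z^2 \<partial>\<rho>)"
proof -
  note I = rho_int[OF assms(1-3)]
  let ?D = "real N * (real N - 1)"
  have D: "?D > 0" using N by simp
  let ?b1 = "\<integral>z. z \<partial>\<rho>" and ?b2 = "\<integral>z. z^2 \<partial>\<rho>"
  have each: "(\<integral>z. (emp_var N (x(i := x i + z)) - emp_var N x) \<partial>\<rho>)
     = ((2 * real N * x i - 2 * Ps N x) / ?D) * ?b1 + ((real N - 1) / ?D) * ?b2" if i: "i < N" for i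
  proof -
    have "(\<integral>z. (emp_var N (x(i := x i + z)) - emp_var N x) \<partial>\<rho>)
       = (\<integral>z. ((2 * real N * x i - 2 * Ps N x) / ?D) * z + ((real N - 1) / ?D) * z^2 \<partial>\<rho>)"
      unfolding V_upd[OF i] by (simp add: add_divide_distrib)
    also have "\<dots> = ((2 * real N * x i - 2 * Ps N x) / ?D) * ?b1 + ((real N - 1) / ?D) * ?b2"
      using I by simp
    finally show ?thesis .
  qed
  have "(\<Sum>i<N. \<integral>z. (emp_var N (x(i := x i + z)) - emp_var N x) \<partial>\<rho>)
     = (\<Sum>i<N. ((2 * real N * x i - 2 * Ps N x) / ?D) * ?b1 + ((real N - 1) / ?D) * ?b2)"
    using each by simp
  also have "\<dots> = ((2 * real N * Ps N x - 2 * real N * Ps N x) / ?D) * ?b1 + real N * ((real N - 1) / ?D) * ?b2"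
    by (simp add: sum.distrib sum_divide_distrib[symmetric] sum_distrib_right[symmetric] sum_subtractf
        sum_distrib_left[symmetric] Ps_def)
  also have "\<dots> = ?b2"
  proof -
    have "real N * ((real N - 1) / ?D) = ?D / ?D" by simp
    also have "\<dots> = 1" using D by (metis divide_self less_irrefl)
    finally have "real N * ((real N - 1) / ?D) = 1" .
    then show ?thesis by simp
  qed
  finally show ?thesis .
qed






lemma offdiag_sum:
  "(\<Sum>a<N. \<Sum>b<N. (if a = b then 0 else c)) = real N * (real N - 1) * (c::real)"
proof -
  have "(\<Sum>b<N. (if a = b then 0 else c)) = (real N - 1) * c" if "a < N" for a
  proof -
    have "(\<Sum>b<N. (if a = b then 0 else c)) = (\<Sum>b<N. c - (if a = b then c else 0))"
      by (rule sum.cong) auto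
    also have "\<dots> = real N * c - c" using that by (simp add: sum_subtractf)
    finally show ?thesis by (simp add: algebra_simps)
  qed
  then have "(\<Sum>a<N. \<Sum>b<N. (if a = b then 0 else c)) = (\<Sum>a<N. (real N - 1) * c)"
    by (intro sum.cong) auto
  then show ?thesis by simp
qed

lemma sync_sum:
  assumes N: "N \<ge> 2"
  shows "(\<Sum>is\<in>tuples N (sum_list ks). Ssum N (sync_map ks is x)) = Cw ks N 0 1 * Ssum N x"
proof -
  let ?T = "tuples N (sum_list ks)"
  let ?D = "\<lambda>a b. (x a - x b)^2"
  have "(\<Sum>is\<in>?T. Ssum N (sync_map ks is x))
      = (\<Sum>is\<in>?T. \<Sum>a<N. \<Sum>b<N. ?D a b * (wc ks is N a * wc ks is N b))"
    unfolding Ssum_def sync_phi by (intro sum.cong refl fiber2) auto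
  also have "\<dots> = (\<Sum>a<N. \<Sum>b<N. ?D a b * Cw ks N a b)"
    unfolding Cw_def sum_distrib_left by (subst sum.swap) (simp add: sum.swap[of _ ?T])
  also have "\<dots> = (\<Sum>a<N. \<Sum>b<N. ?D a b * Cw ks N 0 1)"
  proof (intro sum.cong refl)
    fix a b assume "a \<in> {..<N}" "b \<in> {..<N}"
    then show "?D a b * Cw ks N a b = ?D a b * Cw ks N 0 1"
      using Cw_const[of a N b 0 1 ks] N by (cases "a = b") auto
  qed
  also have "\<dots> = Cw ks N 0 1 * Ssum N x"
    unfolding Ssum_def by (simp add: sum_distrib_left sum_distrib_right mult_ac)
  finally show ?thesis .
qed

lemma Cw_val:
  assumes N: "N \<ge> 2"
  shows "Cw ks N 0 1 * (real N * (real N - 1))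
     = real (card (tuples N (sum_list ks))) *
       (real N * (real N - 1) - (real (\<Sum>j\<leftarrow>ks. j^2) - real (sum_list ks)))"
proof -
  let ?T = "tuples N (sum_list ks)"
  let ?k = "sum_list ks"
  let ?H = "\<lambda>a b. (if a = b then 0 else 1 :: real)"
  have "Cw ks N 0 1 * (real N * (real N - 1)) = (\<Sum>a<N. \<Sum>b<N. (if a = b then 0 else Cw ks N 0 1))"
    by (simp add: offdiag_sum)
  also have "\<dots> = (\<Sum>a<N. \<Sum>b<N. ?H a b * Cw ks N a b)"
  proof (intro sum.cong refl)
    fix a b assume "a \<in> {..<N}" "b \<in> {..<N}"
    then show "(if a = b then 0 else Cw ks N 0 1) = ?H a b * Cw ks N a b"
      using Cw_const[of a N b 0 1 ks] N by (cases "a = b") auto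
  qed
  also have "\<dots> = (\<Sum>is\<in>?T. \<Sum>a<N. \<Sum>b<N. ?H a b * (wc ks is N a * wc ks is N b))"
    unfolding Cw_def sum_distrib_left by (subst sum.swap) (simp add: sum.swap[of _ ?T])
  also have "\<dots> = (\<Sum>is\<in>?T. \<Sum>m<N. \<Sum>n<N. ?H (phi ks is m) (phi ks is n))"
    by (intro sum.cong refl fiber2[symmetric]) auto
  also have "\<dots> = (\<Sum>is\<in>?T. real N * real N - real (N - ?k + (\<Sum>j\<leftarrow>ks. j^2)))"
  proof (intro sum.cong refl)
    fix js assume js: "js \<in> ?T"
    have "(\<Sum>m<N. \<Sum>n<N. ?H (phi ks js m) (phi ks js n))
       = (\<Sum>m<N. \<Sum>n<N. 1 - real (if phi ks js m = phi ks js n then 1 else 0 :: nat))"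
      by (intro sum.cong refl) auto
    also have "\<dots> = real N * real N - real (\<Sum>m<N. \<Sum>n<N. (if phi ks js m = phi ks js n then 1 else 0 :: nat))"
      by (simp add: sum_subtractf of_nat_sum)
    also have "\<dots> = real N * real N - real (N - ?k + (\<Sum>j\<leftarrow>ks. j^2))"
      using phi_count[OF js] by simp
    finally show "(\<Sum>m<N. \<Sum>n<N. ?H (phi ks js m) (phi ks js n)) = real N * real N - real (N - ?k + (\<Sum>j\<leftarrow>ks. j^2))" .
  qed
  finally have "Cw ks N 0 1 * (real N * (real N - 1)) = real (card ?T) * (real N * real N - real (N - ?k + (\<Sum>j\<leftarrow>ks. j^2)))"
    by simp
  moreover have "?T \<noteq> {} \<Longrightarrow> ?k \<le> N"
  proof -
    assume "?T \<noteq> {}"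
    then obtain js where "js \<in> ?T" by auto
    then have "distinct js" "length js = ?k" "set js \<subseteq> {..<N}" by (auto simp: tuples_def)
    then show "?k \<le> N" by (metis card_lessThan card_mono distinct_card finite_lessThan)
  qed
  ultimately show ?thesis
    by (cases "?T = {}") (auto simp: of_nat_diff algebra_simps)
qed


lemma prod_ivl_eq: "k \<le> N \<Longrightarrow> \<Prod>{N - k + 1..N} = (\<Prod>j<k. (N - j :: nat))"
proof (induction k)
  case 0
  then show ?case by simp
next
  case (Suc k)
  have "\<Prod>{N - Suc k + 1..N} = (N - k) * \<Prod>{N - k + 1..N}"
  proof -
    have "N - Suc k + 1 = N - k" using Suc.prems by simp
    moreover have "N - k \<le> N" by simp
    ultimately show ?thesis using prod.atLeast_Suc_atMost[of "N - k" N id] by simp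
  qed
  then show ?case using Suc by (simp add: mult.commute)
qed

lemma card_tuples: "k \<le> N \<Longrightarrow> real (card (tuples N k)) = (\<Prod>j<k. real (N - j))"
proof -
  assume kN: "k \<le> N"
  have "card (tuples N k) = \<Prod>{card {..<N} - k + 1 .. card {..<N}}"
    unfolding tuples_def by (rule card_lists_distinct_length_eq) (use kN in auto)
  also have "\<dots> = (\<Prod>j<k. (N - j :: nat))" using prod_ivl_eq[OF kN] by simp
  finally show ?thesis by simp
qed

lemma card_tuples_pos: "k \<le> N \<Longrightarrow> (\<Prod>j<k. real (N - j)) > 0"
  by (intro prod_pos) auto

lemma alg1: "(D::real) \<noteq> 0 \<Longrightarrow> u * (T * (D - \<kappa>) / D * V - T * V) = u * (T * (- \<kappa> / D) * V)"
  by (simp add: field_simps)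

lemma alg2: "(P::real) \<noteq> 0 \<Longrightarrow> \<alpha> * (u * b) + \<delta> / P * (u * (P * (- \<kappa> / D) * V))
   = u * (\<alpha> * b - \<delta> * \<kappa> / D * V)"
  by (simp add: field_simps)

lemma genL_V:
  fixes \<rho> :: "real measure"
  assumes "prob_space \<rho>" "sets \<rho> = sets borel" "\<exists>C. AE z in \<rho>. \<bar>z\<bar> \<le> C"
    and N: "N \<ge> 2" "sum_list ks \<le> N"
  shows "gen_L \<alpha> \<delta> \<rho> ks N (\<lambda>x. u * emp_var N x + w) x
    = u * (\<alpha> * (\<integral>z. z^2 \<partial>\<rho>) - \<delta> * (real (\<Sum>j\<leftarrow>ks. j^2) - real (sum_list ks))
        / (real N * (real N - 1)) * emp_var N x)"
proof -
  let ?V = "emp_var N"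
  let ?T = "tuples N (sum_list ks)"
  let ?D = "real N * (real N - 1)"
  let ?\<kappa> = "real (\<Sum>j\<leftarrow>ks. j^2) - real (sum_list ks)"
  let ?P = "\<Prod>j<sum_list ks. real (N - j)"
  have D: "?D > 0" using N by simp
  have P: "?P = real (card ?T)" using card_tuples[OF N(2)] by simp
  have Ppos: "?P > 0" using card_tuples_pos[OF N(2)] .
  have part1: "(\<Sum>i<N. \<integral>z. (u * ?V (x(i := x i + z)) + w - (u * ?V x + w)) \<partial>\<rho>)
      = u * (\<integral>z. z^2 \<partial>\<rho>)"
  proof -
    have "(\<Sum>i<N. \<integral>z. (u * ?V (x(i := x i + z)) + w - (u * ?V x + w)) \<partial>\<rho>)
       = (\<Sum>i<N. u * (\<integral>z. (?V (x(i := x i + z)) - ?V x) \<partial>\<rho>))"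
      by (simp add: right_diff_distrib[symmetric])
    also have "\<dots> = u * (\<integral>z. z^2 \<partial>\<rho>)"
      using L0_V[OF assms(1-3) N(1), of x] by (simp add: sum_distrib_left[symmetric])
    finally show ?thesis .
  qed
  have SV: "(\<Sum>is\<in>?T. ?V (sync_map ks is x)) = Cw ks N 0 1 * ?V x"
    unfolding emp_var_S using sync_sum[OF N(1), of ks x]
    by (simp add: sum_divide_distrib[symmetric])
  have Cw: "Cw ks N 0 1 = real (card ?T) * (?D - ?\<kappa>) / ?D"
  proof -
    have "?D \<noteq> 0" using D by linarith
    then show ?thesis using Cw_val[OF N(1), of ks] by (subst nonzero_eq_divide_eq) 
  qed
  have part2: "(\<Sum>is\<in>?T. u * ?V (sync_map ks is x) + w - (u * ?V x + w))
      = u * (real (card ?T) * (- ?\<kappa> / ?D) * ?V x)"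
  proof -
    have "(\<Sum>is\<in>?T. u * ?V (sync_map ks is x) + w - (u * ?V x + w))
       = u * ((\<Sum>is\<in>?T. ?V (sync_map ks is x)) - real (card ?T) * ?V x)"
      by (simp add: sum_subtractf sum_distrib_left right_diff_distrib)
    also have "\<dots> = u * (real (card ?T) * (- ?\<kappa> / ?D) * ?V x)"
      unfolding SV Cw using D by (intro alg1) linarith
    finally show ?thesis .
  qed
  show ?thesis
    unfolding gen_L_def part1 part2 P[symmetric] using Ppos by (intro alg2) linarith
qed

lemma alg3: "(\<beta>::real) \<noteq> 0 \<Longrightarrow> l \<noteq> 0 \<Longrightarrow>
  Q * V + a / \<beta> * (1 - Q) + Q * (a - \<beta> * V) / l = (1 - \<beta> / l) * Q * V + a / \<beta> * (1 - (1 - \<beta> / l) * Q)"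
  by (simp add: field_simps)

lemma K_iter:
  fixes \<rho> :: "real measure"
  assumes "prob_space \<rho>" "sets \<rho> = sets borel" "\<exists>C. AE z in \<rho>. \<bar>z\<bar> \<le> C"
    and N: "N \<ge> 2" "sum_list ks \<le> N"
    and \<beta>: "\<beta> = \<delta> * (real (\<Sum>j\<leftarrow>ks. j^2) - real (sum_list ks)) / (real N * (real N - 1))"
    and \<beta>0: "\<beta> \<noteq> 0" and l: "unif_rate \<alpha> \<delta> N \<noteq> 0"
  shows "(jump_op \<alpha> \<delta> \<rho> ks N ^^ n) (emp_var N)
    = (\<lambda>x. (1 - \<beta> / unif_rate \<alpha> \<delta> N) ^ n * emp_var N x
         + \<alpha> * (\<integral>z. z^2 \<partial>\<rho>) / \<beta> * (1 - (1 - \<beta> / unif_rate \<alpha> \<delta> N) ^ n))"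
proof (induction n)
  case 0
  then show ?case by simp
next
  case (Suc n)
  let ?q = "1 - \<beta> / unif_rate \<alpha> \<delta> N"
  let ?a = "\<alpha> * (\<integral>z. z^2 \<partial>\<rho>)"
  have "(jump_op \<alpha> \<delta> \<rho> ks N ^^ Suc n) (emp_var N)
      = jump_op \<alpha> \<delta> \<rho> ks N (\<lambda>x. ?q ^ n * emp_var N x + ?a / \<beta> * (1 - ?q ^ n))"
    using Suc.IH by simp
  also have "\<dots> = (\<lambda>x. ?q ^ Suc n * emp_var N x + ?a / \<beta> * (1 - ?q ^ Suc n))"
  proof (rule ext)
    fix x
    have "jump_op \<alpha> \<delta> \<rho> ks N (\<lambda>x. ?q ^ n * emp_var N x + ?a / \<beta> * (1 - ?q ^ n)) x
      = ?q ^ n * emp_var N x + ?a / \<beta> * (1 - ?q ^ n) + ?q ^ n * (?a - \<beta> * emp_var N x) / unif_rate \<alpha> \<delta> N"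
      unfolding jump_op_def genL_V[OF assms(1-3) N] \<beta> by (simp add: mult.assoc)
    also have "\<dots> = ?q * ?q ^ n * emp_var N x + ?a / \<beta> * (1 - ?q * ?q ^ n)"
      using alg3[OF \<beta>0 l] by simp
    finally show "jump_op \<alpha> \<delta> \<rho> ks N (\<lambda>x. ?q ^ n * emp_var N x + ?a / \<beta> * (1 - ?q ^ n)) x
        = ?q ^ Suc n * emp_var N x + ?a / \<beta> * (1 - ?q ^ Suc n)" by simp
  qed
  finally show ?case .
qed

lemma integral_lin:
  assumes "prob_space \<mu>" "integrable \<mu> f"
  shows "(\<integral>x. (u * f x + (w::real)) \<partial>\<mu>) = u * (\<integral>x. f x \<partial>\<mu>) + w"
proof -
  interpret prob_space \<mu> by fact
  show ?thesis using assms(2) prob_space.prob_space[OF assms(1)] by simp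
qed

lemma pois_sums:
  fixes l t q R0 c :: real
  shows "(\<lambda>n. exp (- (l * t)) * (l * t) ^ n / fact n * (q ^ n * R0 + c * (1 - q ^ n)))
     sums (exp (- ((1 - q) * l * t)) * R0 + c * (1 - exp (- ((1 - q) * l * t))))"
proof -
  have e1: "(\<lambda>n. (l * t) ^ n / fact n) sums exp (l * t)"
    using exp_converges[of "l * t"] by (simp add: real_scaleR_def divide_inverse mult.commute)
  have e2: "(\<lambda>n. (q * (l * t)) ^ n / fact n) sums exp (q * (l * t))"
    using exp_converges[of "q * (l * t)"] by (simp add: real_scaleR_def divide_inverse mult.commute)
  have "(\<lambda>n. exp (- (l * t)) * ((R0 - c) * ((q * (l * t)) ^ n / fact n) + c * ((l * t) ^ n / fact n)))
      sums (exp (- (l * t)) * ((R0 - c) * exp (q * (l * t)) + c * exp (l * t)))"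
    by (intro sums_mult sums_add e1 e2)
  moreover have "(\<lambda>n. exp (- (l * t)) * ((R0 - c) * ((q * (l * t)) ^ n / fact n) + c * ((l * t) ^ n / fact n)))
     = (\<lambda>n. exp (- (l * t)) * (l * t) ^ n / fact n * (q ^ n * R0 + c * (1 - q ^ n)))"
    by (rule ext) (simp add: power_mult_distrib field_simps)
  moreover have "exp (- (l * t)) * ((R0 - c) * exp (q * (l * t)) + c * exp (l * t))
     = exp (- ((1 - q) * l * t)) * R0 + c * (1 - exp (- ((1 - q) * l * t)))"
  proof -
    have a: "exp (- (l * t)) * exp (q * (l * t)) = exp (- ((1 - q) * l * t))"
      by (simp add: exp_add[symmetric] algebra_simps)
    have b: "exp (- (l * t)) * exp (l * t) = 1" by (simp add: exp_add[symmetric])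
    show ?thesis using a b by (simp add: algebra_simps)
  qed
  ultimately show ?thesis by simp
qed

lemma R_form:
  fixes \<rho> :: "real measure"
  assumes "prob_space \<rho>" "sets \<rho> = sets borel" "\<exists>C. AE z in \<rho>. \<bar>z\<bar> \<le> C"
    and N: "N \<ge> 2" "sum_list ks \<le> N"
    and \<beta>: "\<beta> = \<delta> * (real (\<Sum>j\<leftarrow>ks. j^2) - real (sum_list ks)) / (real N * (real N - 1))"
    and \<beta>0: "\<beta> \<noteq> 0" and l: "unif_rate \<alpha> \<delta> N \<noteq> 0"
    and \<mu>: "prob_space \<mu>" "integrable \<mu> (emp_var N)"
  shows "proc_expect \<alpha> \<delta> \<rho> ks N \<mu> (emp_var N) t
    = \<alpha> * (\<integral>z. z^2 \<partial>\<rho>) / \<beta> * (1 - exp (- (\<beta> * t))) + exp (- (\<beta> * t)) * (\<integral>x. emp_var N x \<partial>\<mu>)"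
proof -
  let ?l = "unif_rate \<alpha> \<delta> N"
  let ?q = "1 - \<beta> / ?l"
  let ?c = "\<alpha> * (\<integral>z. z^2 \<partial>\<rho>) / \<beta>"
  let ?R0 = "\<integral>x. emp_var N x \<partial>\<mu>"
  have "(\<lambda>n. exp (- (?l * t)) * (?l * t) ^ n / fact n
            * (\<integral>x. ((jump_op \<alpha> \<delta> \<rho> ks N ^^ n) (emp_var N)) x \<partial>\<mu>))
      = (\<lambda>n. exp (- (?l * t)) * (?l * t) ^ n / fact n * (?q ^ n * ?R0 + ?c * (1 - ?q ^ n)))"
    unfolding K_iter[OF assms(1-8)] integral_lin[OF \<mu>] by simp
  moreover have "(1 - ?q) * ?l = \<beta>" using l by simp
  ultimately have "(\<lambda>n. exp (- (?l * t)) * (?l * t) ^ n / fact n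
            * (\<integral>x. ((jump_op \<alpha> \<delta> \<rho> ks N ^^ n) (emp_var N)) x \<partial>\<mu>))
     sums (exp (- (\<beta> * t)) * ?R0 + ?c * (1 - exp (- (\<beta> * t))))"
    using pois_sums[of ?l t ?q ?R0 ?c] by simp
  then show ?thesis unfolding proc_expect_def by (simp add: sums_unique[symmetric] algebra_simps)
qed


lemma equiv_from_ratio:
  fixes R :: "nat \<Rightarrow> real"
  assumes "((\<lambda>N. R N / (real N)^2) \<longlongrightarrow> L) sequentially" "L \<noteq> 0"
  shows "R \<sim>[sequentially] (\<lambda>N. L * (real N)^2)"
proof (rule asymp_equivI')
  have "((\<lambda>N. R N / (real N)^2 / L) \<longlongrightarrow> L / L) sequentially"
    by (intro tendsto_divide assms tendsto_const)
  then show "((\<lambda>N. R N / (L * (real N)^2)) \<longlongrightarrow> 1) sequentially"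
    using assms(2) by (simp add: divide_divide_eq_left mult.commute)
qed

lemma lim_D: "((\<lambda>N. real N * (real N - 1) / (real N)^2) \<longlongrightarrow> 1) sequentially"
  by real_asymp

lemma lim_Dinv: "((\<lambda>N. (real N)^2 / (real N * (real N - 1))) \<longlongrightarrow> 1) sequentially"
  by real_asymp

lemma lim_h: "((\<lambda>y::real. (1 - exp (- y)) / y) \<longlongrightarrow> 1) (at_right 0)"
  by real_asymp

lemma lim_invsq: "((\<lambda>N. 1 / (real N)^2) \<longlongrightarrow> 0) sequentially"
  by real_asymp

lemma asym:
  fixes R R0 t :: "nat \<Rightarrow> real" and A K B :: real
  assumes A: "A > 0" and K: "K > 0"
    and Rf: "eventually (\<lambda>N. R N = A / (K / (real N * (real N - 1))) *
        (1 - exp (- (K / (real N * (real N - 1)) * t N)))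
        + exp (- (K / (real N * (real N - 1)) * t N)) * R0 N) sequentially"
    and Bd: "eventually (\<lambda>N. \<bar>R0 N\<bar> \<le> B) sequentially"
    and t: "filterlim t at_top sequentially"
  shows "((\<lambda>N. t N / (real N)^2) \<longlonglongrightarrow> 0 \<longrightarrow> R \<sim>[sequentially] (\<lambda>N. A * t N))
    \<and> (\<forall>c>0. (\<forall>N. t N = c * (real N)^2) \<longrightarrow>
          R \<sim>[sequentially] (\<lambda>N. A / K * (1 - exp (- (K * c))) * (real N)^2))
    \<and> (filterlim (\<lambda>N. t N / (real N)^2) at_top sequentially \<longrightarrow>
          R \<sim>[sequentially] (\<lambda>N. A / K * (real N)^2))"
proof -
  define D where "D = (\<lambda>N. real N * (real N - 1))"
  define y where "y = (\<lambda>N. K / D N * t N)"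
  have evN: "eventually (\<lambda>N. N \<ge> (2::nat)) sequentially" by (rule eventually_ge_at_top)
  have evD: "eventually (\<lambda>N. D N > 0) sequentially"
    using evN by eventually_elim (simp add: D_def)
  have evt: "eventually (\<lambda>N. t N > 0) sequentially"
    using t unfolding filterlim_at_top_dense by blast
  have evy: "eventually (\<lambda>N. y N > 0) sequentially"
    using evD evt by eventually_elim (use K in \<open>simp add: y_def\<close>)
  have Rf': "eventually (\<lambda>N. R N = A * D N / K * (1 - exp (- y N)) + exp (- y N) * R0 N) sequentially"
    using Rf evD by eventually_elim (simp add: y_def D_def)
  have yform: "eventually (\<lambda>N. y N = K * (t N / (real N)^2) * ((real N)^2 / D N)) sequentially"
    using evD evN by eventually_elim (auto simp: y_def field_simps)
  have Dlim: "((\<lambda>N. D N / (real N)^2) \<longlongrightarrow> 1) sequentially" unfolding D_def by (rule lim_D)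
  have Dilim: "((\<lambda>N. (real N)^2 / D N) \<longlongrightarrow> 1) sequentially" unfolding D_def by (rule lim_Dinv)
  have R0lim: "((\<lambda>N. exp (- y N) * (R0 N / (real N)^2)) \<longlongrightarrow> 0) sequentially"
  proof (rule Lim_null_comparison)
    show "eventually (\<lambda>N. norm (exp (- y N) * (R0 N / (real N)^2)) \<le> B * (1 / (real N)^2)) sequentially"
      using evy Bd evN
    proof eventually_elim
      case (elim N)
      have "exp (- y N) \<le> 1" using elim(1) by simp
      then have "exp (- y N) * \<bar>R0 N\<bar> \<le> \<bar>R0 N\<bar>"
        by (intro mult_left_le_one_le) auto
      then have "exp (- y N) * \<bar>R0 N\<bar> / (real N)^2 \<le> \<bar>R0 N\<bar> / (real N)^2"
        by (rule divide_right_mono) simp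
      then have "norm (exp (- y N) * (R0 N / (real N)^2)) \<le> 1 * (\<bar>R0 N\<bar> / (real N)^2)"
        by (simp add: abs_mult)
      also have "\<dots> \<le> B * (1 / (real N)^2)" using elim(2) by (simp add: divide_right_mono)
      finally show ?case .
    qed
    show "((\<lambda>N. B * (1 / (real N)^2)) \<longlongrightarrow> 0) sequentially"
      using tendsto_mult_right_zero[OF lim_invsq, of B] .
  qed
  have Rsq: "eventually (\<lambda>N. R N / (real N)^2 = A / K * (D N / (real N)^2) * (1 - exp (- y N))
      + exp (- y N) * (R0 N / (real N)^2)) sequentially"
    using Rf' by eventually_elim (simp add: add_divide_distrib)
  have part1: "(\<lambda>N. t N / (real N)^2) \<longlonglongrightarrow> 0 \<longrightarrow> R \<sim>[sequentially] (\<lambda>N. A * t N)"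
  proof
    assume t0: "(\<lambda>N. t N / (real N)^2) \<longlonglongrightarrow> 0"
    have "((\<lambda>N. K * (t N / (real N)^2) * ((real N)^2 / D N)) \<longlongrightarrow> K * 0 * 1) sequentially"
      by (intro tendsto_mult tendsto_const t0 Dilim)
    then have y0: "(y \<longlongrightarrow> 0) sequentially"
      using yform by (simp add: tendsto_cong)
    have yr: "filterlim y (at_right 0) sequentially"
      by (rule tendsto_imp_filterlim_at_right[OF y0 evy])
    have h: "((\<lambda>N. (1 - exp (- y N)) / y N) \<longlongrightarrow> 1) sequentially"
      using filterlim_compose[OF lim_h yr] by (simp add: o_def)
    have sec: "((\<lambda>N. exp (- y N) * R0 N / (A * t N)) \<longlongrightarrow> 0) sequentially"
    proof (rule Lim_null_comparison)
      show "eventually (\<lambda>N. norm (exp (- y N) * R0 N / (A * t N)) \<le> B / A * inverse (t N)) sequentially"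
        using evy Bd evt
      proof eventually_elim
        case (elim N)
        have "exp (- y N) \<le> 1" using elim(1) by simp
        then have "exp (- y N) * \<bar>R0 N\<bar> \<le> \<bar>R0 N\<bar>"
          by (intro mult_left_le_one_le) auto
        then have "exp (- y N) * \<bar>R0 N\<bar> \<le> B" using elim(2) by linarith
        then have "exp (- y N) * \<bar>R0 N\<bar> / (A * t N) \<le> B / (A * t N)"
          by (rule divide_right_mono) (use A elim(3) in simp)
        moreover have "norm (exp (- y N) * R0 N / (A * t N)) = exp (- y N) * \<bar>R0 N\<bar> / (A * t N)"
          using A elim(3) by (simp add: abs_mult)
        moreover have "B / (A * t N) = B / A * inverse (t N)" by (simp add: field_simps)
        ultimately show ?case by simp
      qed
      show "((\<lambda>N. B / A * inverse (t N)) \<longlongrightarrow> 0) sequentially"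
        using tendsto_mult_right_zero[OF tendsto_inverse_0_at_top[OF t], of "B / A"] .
    qed
    have "((\<lambda>N. (1 - exp (- y N)) / y N + exp (- y N) * R0 N / (A * t N)) \<longlongrightarrow> 1 + 0) sequentially"
      by (intro tendsto_add h sec)
    moreover have "eventually (\<lambda>N. (1 - exp (- y N)) / y N + exp (- y N) * R0 N / (A * t N)
        = R N / (A * t N)) sequentially"
      using Rf' evD evt
    proof eventually_elim
      case (elim N)
      have "R N / (A * t N) = A * D N / K * (1 - exp (- y N)) / (A * t N) + exp (- y N) * R0 N / (A * t N)"
        using elim(1) by (simp add: add_divide_distrib)
      moreover have "A * D N / K * (1 - exp (- y N)) / (A * t N) = (1 - exp (- y N)) / y N"
        using A K elim(2,3) by (simp add: y_def field_simps)
      ultimately show ?case by simp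
    qed
    ultimately have "((\<lambda>N. R N / (A * t N)) \<longlongrightarrow> 1) sequentially"
      by (simp add: tendsto_cong)
    then show "R \<sim>[sequentially] (\<lambda>N. A * t N)" by (rule asymp_equivI')
  qed
  have part2: "\<forall>c>0. (\<forall>N. t N = c * (real N)^2) \<longrightarrow>
          R \<sim>[sequentially] (\<lambda>N. A / K * (1 - exp (- (K * c))) * (real N)^2)"
  proof (intro allI impI)
    fix c :: real assume c: "c > 0" and tc: "\<forall>N. t N = c * (real N)^2"
    have "eventually (\<lambda>N. y N = K * c * ((real N)^2 / D N)) sequentially"
      using yform evN by eventually_elim (simp add: tc)
    moreover have "((\<lambda>N. K * c * ((real N)^2 / D N)) \<longlongrightarrow> K * c * 1) sequentially"
      by (intro tendsto_mult tendsto_const Dilim)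
    ultimately have yl: "(y \<longlongrightarrow> K * c) sequentially" by (simp add: tendsto_cong)
    have "((\<lambda>N. A / K * (D N / (real N)^2) * (1 - exp (- y N)) + exp (- y N) * (R0 N / (real N)^2))
        \<longlongrightarrow> A / K * 1 * (1 - exp (- (K * c))) + 0) sequentially"
      by (intro tendsto_add tendsto_mult tendsto_const Dlim tendsto_diff tendsto_exp tendsto_minus yl R0lim)
    then have "((\<lambda>N. R N / (real N)^2) \<longlongrightarrow> A / K * (1 - exp (- (K * c)))) sequentially"
      using Rsq by (simp add: tendsto_cong)
    moreover have "A / K * (1 - exp (- (K * c))) \<noteq> 0" using A K c by simp
    ultimately show "R \<sim>[sequentially] (\<lambda>N. A / K * (1 - exp (- (K * c))) * (real N)^2)"
      by (rule equiv_from_ratio)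
  qed
  have part3: "filterlim (\<lambda>N. t N / (real N)^2) at_top sequentially \<longrightarrow>
          R \<sim>[sequentially] (\<lambda>N. A / K * (real N)^2)"
  proof
    assume ti: "filterlim (\<lambda>N. t N / (real N)^2) at_top sequentially"
    have "((\<lambda>N. K * ((real N)^2 / D N)) \<longlongrightarrow> K * 1) sequentially"
      by (intro tendsto_mult tendsto_const Dilim)
    then have f1: "filterlim (\<lambda>N. K * ((real N)^2 / D N) * (t N / (real N)^2)) at_top sequentially"
      using K by (intro filterlim_tendsto_pos_mult_at_top[OF _ _ ti]) auto
    have f2: "eventually (\<lambda>N. K * ((real N)^2 / D N) * (t N / (real N)^2) = y N) sequentially"
      using yform by eventually_elim simp
    have yi: "filterlim y at_top sequentially"
      using filterlim_cong[OF refl refl f2] f1 by simp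
    have "filterlim (\<lambda>N. exp (y N)) at_top sequentially"
      by (rule filterlim_compose[OF exp_at_top yi])
    then have "((\<lambda>N. inverse (exp (y N))) \<longlongrightarrow> 0) sequentially"
      by (rule tendsto_inverse_0_at_top)
    then have e0: "((\<lambda>N. exp (- y N)) \<longlongrightarrow> 0) sequentially" by (simp add: exp_minus)
    have "((\<lambda>N. A / K * (D N / (real N)^2) * (1 - exp (- y N)) + exp (- y N) * (R0 N / (real N)^2))
        \<longlongrightarrow> A / K * 1 * (1 - 0) + 0) sequentially"
      by (intro tendsto_add tendsto_mult tendsto_const Dlim tendsto_diff e0 R0lim)
    then have "((\<lambda>N. R N / (real N)^2) \<longlongrightarrow> A / K) sequentially"
      using Rsq by (simp add: tendsto_cong)
    moreover have "A / K \<noteq> 0" using A K by simp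
    ultimately show "R \<sim>[sequentially] (\<lambda>N. A / K * (real N)^2)"
      by (rule equiv_from_ratio)
  qed
  show ?thesis using part1 part2 part3 by blast
qed


lemma sum_sq_gt: "\<forall>j\<in>set ks. j \<ge> (2::nat) \<Longrightarrow> ks \<noteq> [] \<Longrightarrow> sum_list ks < (\<Sum>j\<leftarrow>ks. j^2)"
proof (induction ks)
  case Nil
  then show ?case by simp
next
  case (Cons a ks)
  have a: "a < a^2" using Cons.prems(1) by (simp add: power2_eq_square)
  show ?case
  proof (cases "ks = []")
    case True
    then show ?thesis using a by simp
  next
    case False
    then have "sum_list ks < (\<Sum>j\<leftarrow>ks. j^2)" using Cons by simp
    then show ?thesis using a by simp
  qed
qed

theorem theorem2:
  fixes ks :: "nat list" and k :: nat and \<alpha> \<delta> :: real and \<rho> :: "real measure"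
    and \<mu>0 :: "nat \<Rightarrow> (nat \<Rightarrow> real) measure" and t :: "nat \<Rightarrow> real"
  assumes k_def: "k = sum_list ks" and k2: "k \<ge> 2"
    and ks2: "\<forall>kj\<in>set ks. kj \<ge> 2"
    and \<alpha>: "\<alpha> > 0" and \<delta>: "\<delta> > 0"
    and \<rho>_prob: "prob_space \<rho>" and \<rho>_sets: "sets \<rho> = sets borel"
    and \<rho>_cpt: "\<exists>C. AE z in \<rho>. \<bar>z\<bar> \<le> C"
    and b2_pos: "(\<integral>z. z^2 \<partial>\<rho>) > 0"
    and \<mu>0_prob: "\<forall>N\<ge>k. prob_space (\<mu>0 N)"
    and \<mu>0_sets: "\<forall>N\<ge>k. sets (\<mu>0 N) = sets (PiM {..<N} (\<lambda>_. borel))"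
    and V0_int: "\<forall>N\<ge>k. integrable (\<mu>0 N) (emp_var N)"
    and R0_bdd: "\<exists>B. \<forall>N\<ge>k. \<bar>proc_expect \<alpha> \<delta> \<rho> ks N (\<mu>0 N) (emp_var N) 0\<bar> \<le> B"
    and t_lim: "filterlim t at_top sequentially"
  shows
    "let R = (\<lambda>N s. proc_expect \<alpha> \<delta> \<rho> ks N (\<mu>0 N) (emp_var N) s);
         b2 = (\<integral>z. z^2 \<partial>\<rho>);
         \<kappa> = real (\<Sum>j\<leftarrow>ks. j^2) - real k
     in ((\<lambda>N. t N / (real N)^2) \<longlonglongrightarrow> 0 \<longrightarrow>
           (\<lambda>N. R N (t N)) \<sim>[sequentially] (\<lambda>N. \<alpha> * b2 * t N))
      \<and> (\<forall>c>0. (\<forall>N. t N = c * (real N)^2) \<longrightarrow>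
           (\<lambda>N. R N (t N)) \<sim>[sequentially]
             (\<lambda>N. \<alpha> * b2 / (\<delta> * \<kappa>) * (1 - exp (- \<delta> * \<kappa> * c)) * (real N)^2))
      \<and> (filterlim (\<lambda>N. t N / (real N)^2) at_top sequentially \<longrightarrow>
           (\<lambda>N. R N (t N)) \<sim>[sequentially] (\<lambda>N. \<alpha> * b2 / (\<delta> * \<kappa>) * (real N)^2))"
proof -
  define b2 where "b2 = (\<integral>z. z^2 \<partial>\<rho>)"
  define \<kappa> where "\<kappa> = real (\<Sum>j\<leftarrow>ks. j^2) - real k"
  have ksne: "ks \<noteq> []" using k2 k_def by auto
  have "sum_list ks < (\<Sum>j\<leftarrow>ks. j^2)" by (rule sum_sq_gt[OF ks2 ksne])
  then have \<kappa>pos: "\<kappa> > 0" unfolding \<kappa>_def k_def by linarith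
  have A: "\<alpha> * b2 > 0" using \<alpha> b2_pos b2_def by simp
  have K: "\<delta> * \<kappa> > 0" using \<delta> \<kappa>pos by simp
  obtain B where B: "\<forall>N\<ge>k. \<bar>proc_expect \<alpha> \<delta> \<rho> ks N (\<mu>0 N) (emp_var N) 0\<bar> \<le> B"
    using R0_bdd by blast
  let ?R0 = "\<lambda>N. \<integral>x. emp_var N x \<partial>(\<mu>0 N)"
  have form: "proc_expect \<alpha> \<delta> \<rho> ks N (\<mu>0 N) (emp_var N) s = \<alpha> * b2 / (\<delta> * \<kappa> / (real N * (real N - 1))) *
        (1 - exp (- (\<delta> * \<kappa> / (real N * (real N - 1)) * s)))
        + exp (- (\<delta> * \<kappa> / (real N * (real N - 1)) * s)) * ?R0 N" if N: "N \<ge> k" for N s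
  proof -
    have N2: "N \<ge> 2" using N k2 by simp
    have D: "real N * (real N - 1) > 0" using N2 by simp
    have "\<alpha> * real N \<ge> 0" using \<alpha> by simp
    then have l: "unif_rate \<alpha> \<delta> N \<noteq> 0" unfolding unif_rate_def using \<delta> by linarith
    have b: "\<delta> * \<kappa> / (real N * (real N - 1)) \<noteq> 0" using K D by (metis divide_pos_pos less_irrefl)
    have Nk: "sum_list ks \<le> N" using N k_def by simp
    have bdef: "\<delta> * \<kappa> / (real N * (real N - 1))
        = \<delta> * (real (\<Sum>j\<leftarrow>ks. j^2) - real (sum_list ks)) / (real N * (real N - 1))"
      by (simp add: \<kappa>_def k_def)
    show ?thesis
      using R_form[where \<beta>="\<delta> * \<kappa> / (real N * (real N - 1))" and \<delta>=\<delta> and \<mu>="\<mu>0 N" and t=s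
          and ks=ks and N=N and \<alpha>=\<alpha> and \<rho>=\<rho>,
          OF \<rho>_prob \<rho>_sets \<rho>_cpt N2 Nk bdef b l] \<mu>0_prob V0_int N
      unfolding b2_def by simp
  qed
  have Rf: "eventually (\<lambda>N. proc_expect \<alpha> \<delta> \<rho> ks N (\<mu>0 N) (emp_var N) (t N) = \<alpha> * b2 / (\<delta> * \<kappa> / (real N * (real N - 1))) *
        (1 - exp (- (\<delta> * \<kappa> / (real N * (real N - 1)) * t N)))
        + exp (- (\<delta> * \<kappa> / (real N * (real N - 1)) * t N)) * ?R0 N) sequentially"
    using eventually_ge_at_top[of k] by eventually_elim (rule form)
  have Bd: "eventually (\<lambda>N. \<bar>?R0 N\<bar> \<le> B) sequentially"
    using eventually_ge_at_top[of k]
  proof eventually_elim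
    case (elim N)
    then show ?case using B form[OF elim, of 0] by force
  qed
  note main = asym[OF A K Rf Bd t_lim]
  show ?thesis unfolding Let_def b2_def[symmetric] \<kappa>_def[symmetric] using main by simp
qed

end
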